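(* Let $S$ be an inverse monoid and $\mathcal M$ a finite quasi-generating set for $S$. Then the action of $S$ on the presheaf of geodesic metric spaces $(S,d_{\mathcal M})$ over $E(S)$ (with projection $s\mapsto s^{-1}s$ and action given by right multiplication) is proper and cobounded.
   Context: An inverse monoid is a monoid $S$ (identity $1$) in which every $s$ has a unique $s^{-1}$ with $ss^{-1}s=s$, $s^{-1}ss^{-1}=s^{-1}$. $E(S)$ is its set of idempotents. Green's relation $\mathcal L$: $(s,t)\in\mathcal L$ iff $s^{-1}s=t^{-1}t$. A quasi-generating set is a subset $\mathcal M=\mathcal M^{-1}\subseteq S$ such that $S$ is generated as a semigroup by $\mathcal M\cup E(S)$. The Cayley metric: $d_{\mathcal M}(s,t)=\infty$ if $(s,t)\notin\mathcal L$, and otherwise the path distance from $s$ to $t$ in the graph on the $\mathcal L$-class of $s$ with $u,v$ joined by an edge of length 1 whenever $gu=v$ for some $g\in\mathcal M$. This makes $S$ a presheaf of metric spaces over $E(S)$: projection $p(s)=s^{-1}s$, fiber over $e$ the $\mathcal L$-class $\{s: s^{-1}s=e\}$, and $S$ acts on it by right multiplication. For an inverse monoid $S$ acting (on the right) on a presheaf of metric spaces $X$ over $E(S)$ with fibers $X_e$ and extended metric $d$ (infinite between different fibers): the action is proper if for every $y_1\in X_1$ and $R\ge0$ there is a finite $\mathcal C\subseteq S$ with $\{s\in S: d(y_1\cdot s, y_1\cdot s^{-1}s)\le R\}\subseteq\{ce: c\in\mathcal C, e\in E(S)\}$; it is cobounded if there exist $x_1\in X_1$ and $T\ge0$ such that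 every point of $X$ is of the form $y\cdot s$ with $s\in S$ and $d(x_1,y)\le T$. *)

theory Defs
  imports Main "HOL-Library.Extended_Real"
begin

definition inverse_monoid :: "'a::monoid_mult itself \<Rightarrow> bool" where
  "inverse_monoid _ \<longleftrightarrow> (\<forall>s::'a. \<exists>!t. s * t * s = s \<and> t * s * t = t)"

definition minv :: "'a::monoid_mult \<Rightarrow> 'a" where
  "minv s = (THE t. s * t * s = s \<and> t * s * t = t)"

definition idems :: "'a::monoid_mult set" where
  "idems = {e. e * e = e}"

definition greenL :: "'a::monoid_mult \<Rightarrow> 'a \<Rightarrow> bool" where
  "greenL s t \<longleftrightarrow> minv s * s = minv t * t"

inductive_set sgen :: "'a::monoid_mult set \<Rightarrow> 'a set" for A where
  base: "a \<in> A \<Longrightarrow> a \<in> sgen A"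
| mult: "x \<in> sgen A \<Longrightarrow> y \<in> sgen A \<Longrightarrow> x * y \<in> sgen A"

definition quasi_generating :: "'a::monoid_mult set \<Rightarrow> bool" where
  "quasi_generating M \<longleftrightarrow> minv ` M = M \<and> sgen (M \<union> idems) = UNIV"

definition cayley_edge :: "'a::monoid_mult set \<Rightarrow> 'a \<Rightarrow> 'a \<Rightarrow> bool" where
  "cayley_edge M u v \<longleftrightarrow> (\<exists>g\<in>M. g * u = v \<or> g * v = u)"

definition cayley_path :: "'a::monoid_mult set \<Rightarrow> 'a \<Rightarrow> 'a \<Rightarrow> nat \<Rightarrow> bool" where
  "cayley_path M s t n \<longleftrightarrow> (\<exists>p::nat \<Rightarrow> 'a. p 0 = s \<and> p n = t \<and>
      (\<forall>i\<le>n. greenL s (p i)) \<and> (\<forall>i<n. cayley_edge M (p i) (p (Suc i))))"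

definition cayley_dist :: "'a::monoid_mult set \<Rightarrow> 'a \<Rightarrow> 'a \<Rightarrow> ereal" where
  "cayley_dist M s t =
     (if greenL s t \<and> (\<exists>n. cayley_path M s t n)
      then ereal (real (LEAST n. cayley_path M s t n)) else \<infinity>)"

text \<open>Actions of an inverse monoid S (a type) on a presheaf of metric spaces X over E(S),
  given by a projection p : X \<Rightarrow> E(S), a right action act, and an extended metric d
  (infinite between different fibres).\<close>
definition proper_action ::
  "('x \<Rightarrow> 'a::monoid_mult) \<Rightarrow> ('x \<Rightarrow> 'a \<Rightarrow> 'x) \<Rightarrow> ('x \<Rightarrow> 'x \<Rightarrow> ereal) \<Rightarrow> bool" where
  "proper_action p act d \<longleftrightarrow>
     (\<forall>y1 R. p y1 = 1 \<and> R \<ge> 0 \<longrightarrow>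
        (\<exists>C. finite C \<and>
          {s. d (act y1 s) (act y1 (minv s * s)) \<le> ereal R}
            \<subseteq> {c * e | c e. c \<in> C \<and> e \<in> idems}))"

definition cobounded_action ::
  "('x \<Rightarrow> 'a::monoid_mult) \<Rightarrow> ('x \<Rightarrow> 'a \<Rightarrow> 'x) \<Rightarrow> ('x \<Rightarrow> 'x \<Rightarrow> ereal) \<Rightarrow> bool" where
  "cobounded_action p act d \<longleftrightarrow>
     (\<exists>x1 T. p x1 = 1 \<and> T \<ge> 0 \<and>
        (\<forall>x. \<exists>y s. x = act y s \<and> d x1 y \<le> ereal T))"

end

theory Submission
  imports Defs
begin

context fixes T :: "'a::monoid_mult itself" assumes IM: "inverse_monoid TYPE('a)"
begin

lemma minv_prop: "(s::'a) * minv s * s = s \<and> minv s * s * minv s = minv s"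
proof -
  have "\<exists>!t. s * t * s = s \<and> t * s * t = t" using IM unfolding inverse_monoid_def by blast
  then show ?thesis unfolding minv_def by (rule theI')
qed

lemma minv_unique: "(s::'a) * t * s = s \<Longrightarrow> t * s * t = t \<Longrightarrow> minv s = t"
proof -
  assume a: "s * t * s = s" "t * s * t = t"
  have "\<exists>!t. s * t * s = s \<and> t * s * t = t" using IM unfolding inverse_monoid_def by blast
  then show ?thesis unfolding minv_def using a by (simp add: the1_equality)
qed

lemma minv_idem: "(e::'a) * e = e \<Longrightarrow> minv e = e"
  by (rule minv_unique) simp_all

lemma idem_comm:
  assumes e: "(e::'a) * e = e" and f: "f * f = f"
  shows "e * f = f * e"
proof -
  have ee: "e * (e * z) = e * z" for z using e by (metis mult.assoc)
  have ff: "f * (f * z) = f * z" for z using f by (metis mult.assoc)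
  have gen: "(a::'a) * a = a \<Longrightarrow> b * b = b \<Longrightarrow> (a*b)*(a*b) = a*b" for a b
  proof -
    assume a: "a*a = a" and b: "b*b = b"
    have aa: "a * (a * z) = a * z" for z using a by (metis mult.assoc)
    have bb: "b * (b * z) = b * z" for z using b by (metis mult.assoc)
    define x where "x = minv (a*b)"
    have x1: "a*b*x*a*b = a*b" and x2: "x*(a*b)*x = x" using minv_prop[of "a*b"] x_def by (simp_all add: mult.assoc)
    have "minv (a*b) = b*x*a"
    proof (rule minv_unique)
      show "a * b * (b * x * a) * (a * b) = a * b" using x1 by (simp add: mult.assoc aa bb)
      have "b*x*a*(a*b)*(b*x*a) = b*(x*(a*b)*x)*a" by (simp add: mult.assoc aa bb)
      then show "b*x*a*(a*b)*(b*x*a) = b*x*a" using x2 by simp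
    qed
    hence xe: "x = b*x*a" using x_def by simp
    have xx: "x*x = x"
    proof -
      have "x*x = b*(x*(a*b)*x)*a" using xe by (metis mult.assoc)
      also have "... = x" using x2 xe by (simp add: mult.assoc)
      finally show ?thesis .
    qed
    have "minv x = x" using xx by (rule minv_idem)
    moreover have "minv x = a*b" apply (rule minv_unique) using x1 x2 by (simp_all add: mult.assoc)
    ultimately show ?thesis using xx by simp
  qed
  have ef: "(e*f)*(e*f) = e*f" using gen e f .
  have fe: "(f*e)*(f*e) = f*e" using gen f e .
  have "minv (e*f) = e*f" using ef by (rule minv_idem)
  moreover have "minv (e*f) = f*e"
    apply (rule minv_unique)
    using ef fe by (simp_all add: mult.assoc ee ff)
  ultimately show ?thesis by simp
qed


lemma minv_mult: "minv ((a::'a) * b) = minv b * minv a"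
proof (rule minv_unique)
  have pa: "a * minv a * a = a" "minv a * a * minv a = minv a" using minv_prop[of a] by auto
  have pb: "b * minv b * b = b" "minv b * b * minv b = minv b" using minv_prop[of b] by auto
  have c: "(b * minv b) * (minv a * a) = (minv a * a) * (b * minv b)"
    by (rule idem_comm) (metis pa pb mult.assoc)+
  have "a * b * (minv b * minv a) * (a * b) = a * ((b * minv b) * (minv a * a)) * b"
    by (simp add: mult.assoc)
  also have "... = (a * minv a * a) * (b * minv b * b)" using c by (simp add: mult.assoc)
  finally show "a * b * (minv b * minv a) * (a * b) = a * b" using pa pb by simp
  have "minv b * minv a * (a * b) * (minv b * minv a) = minv b * ((minv a * a) * (b * minv b)) * minv a"
    by (simp add: mult.assoc)
  also have "... = minv b * ((b * minv b) * (minv a * a)) * minv a" using c by simp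
  also have "... = (minv b * b * minv b) * (minv a * a * minv a)" by (simp add: mult.assoc)
  finally show "minv b * minv a * (a * b) * (minv b * minv a) = minv b * minv a" using pa pb by simp
qed

lemma reversal:
  assumes gab: "(g::'a) * a = b" and L: "minv a * a = minv b * b"
  shows "minv g * b = a"
proof -
  define f where "f = minv g * g"
  have fi: "f * f = f" unfolding f_def using minv_prop[of g] by (metis mult.assoc)
  have ai: "(a * minv a) * (a * minv a) = a * minv a" using minv_prop[of a] by (metis mult.assoc)
  have c: "(a * minv a) * f = f * (a * minv a)" using idem_comm[OF ai fi] .
  have "a = a * minv a * a" using minv_prop[of a] by simp
  also have "... = a * (minv b * b)" using L by (simp add: mult.assoc)
  also have "... = (a * minv a) * f * a" using gab minv_mult[of g a] by (simp add: f_def mult.assoc)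
  also have "... = f * (a * minv a * a)" using c by (simp add: mult.assoc)
  also have "... = f * a" using minv_prop[of a] by simp
  finally have "a = f * a" .
  then show ?thesis using gab f_def by (simp add: mult.assoc)
qed

end

fun wordsM :: "'a::monoid_mult set \<Rightarrow> nat \<Rightarrow> 'a set" where
  "wordsM M 0 = {1}"
| "wordsM M (Suc k) = (\<lambda>(g,w). g*w) ` (M \<times> wordsM M k)"

lemma finite_wordsM: "finite M \<Longrightarrow> finite (wordsM M k)"
  by (induction k) auto

lemma path_words:
  assumes IM: "inverse_monoid TYPE('a)" and MM: "minv ` M = M"
    and G: "\<forall>i\<le>n. greenL (p 0) ((p::nat \<Rightarrow> 'a::monoid_mult) i)"
    and E: "\<forall>i<n. cayley_edge M (p i) (p (Suc i))"
  shows "i \<le> n \<Longrightarrow> \<exists>w\<in>wordsM M i. p i = w * p 0"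
proof (induction i)
  case 0 then show ?case by simp
next
  case (Suc i)
  then obtain w where w: "w \<in> wordsM M i" "p i = w * p 0" by auto
  have L: "minv (p i) * p i = minv (p (Suc i)) * p (Suc i)"
    using G Suc.prems unfolding greenL_def by (metis Suc_leD)
  obtain g where g: "g \<in> M" "g * p i = p (Suc i) \<or> g * p (Suc i) = p i"
    using E Suc.prems unfolding cayley_edge_def by (meson Suc_le_lessD)
  have "\<exists>h\<in>M. p (Suc i) = h * p i"
  proof (cases "g * p i = p (Suc i)")
    case True then show ?thesis using g by metis
  next
    case False
    then have "g * p (Suc i) = p i" using g by auto
    then have "minv g * p i = p (Suc i)" using reversal[OF IM _ L[symmetric]] by blast
    moreover have "minv g \<in> M" using MM g by blast
    ultimately show ?thesis by metis
  qed
  then obtain h where "h \<in> M" "p (Suc i) = h * p i" by blast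
  then show ?case using w by (intro bexI[of _ "h*w"]) (auto simp: mult.assoc)
qed

theorem lemma2p3:
  fixes M :: "'a::monoid_mult set"
  assumes "inverse_monoid TYPE('a)"
    and "finite M"
    and "quasi_generating M"
  shows "proper_action (\<lambda>s::'a. minv s * s) (\<lambda>y s. y * s) (cayley_dist M)
       \<and> cobounded_action (\<lambda>s::'a. minv s * s) (\<lambda>y s. y * s) (cayley_dist M)"
proof
  note IM = assms(1)
  have MM: "minv ` M = M" using assms(3) unfolding quasi_generating_def by blast
  have m1: "minv (1::'a) = 1" using minv_idem[OF IM] by simp
  show "cobounded_action (\<lambda>s::'a. minv s * s) (\<lambda>y s. y * s) (cayley_dist M)"
    unfolding cobounded_action_def
  proof (rule exI[of _ 1], rule exI[of _ 0], intro conjI allI)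
    show "minv (1::'a) * 1 = 1" using m1 by simp
    show "(0::real) \<le> 0" by simp
    fix x :: 'a
    show "\<exists>y s. x = y * s \<and> cayley_dist M 1 y \<le> ereal 0"
    proof -
    have P: "cayley_path M 1 1 0" unfolding cayley_path_def greenL_def
      by (rule exI[of _ "\<lambda>_. 1"]) simp
    hence "(LEAST n. cayley_path M 1 1 n) = 0" by (simp add: Least_eq_0)
    hence "cayley_dist M 1 1 \<le> ereal 0" using P unfolding cayley_dist_def greenL_def by auto
    then show ?thesis by force
  qed
  qed
  show "proper_action (\<lambda>s::'a. minv s * s) (\<lambda>y s. y * s) (cayley_dist M)"
    unfolding proper_action_def
  proof (intro allI impI)
    fix y1 :: 'a and R :: real
    assume a: "minv y1 * y1 = 1 \<and> 0 \<le> R"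
    define N where "N = nat \<lceil>R\<rceil>"
    define C where "C = (\<lambda>w. minv y1 * w * y1) ` (\<Union>k\<le>N. wordsM M k)"
    have fC: "finite C" unfolding C_def using finite_wordsM[OF assms(2)] by auto
    have "{s. cayley_dist M (y1 * s) (y1 * (minv s * s)) \<le> ereal R} \<subseteq> {c * e |c e. c \<in> C \<and> e \<in> idems}"
    proof
      fix s assume "s \<in> {s. cayley_dist M (y1 * s) (y1 * (minv s * s)) \<le> ereal R}"
      then have d: "cayley_dist M (y1 * s) (y1 * (minv s * s)) \<le> ereal R" by simp
      define u where "u = y1 * s"
      define e where "e = minv s * s"
      define v where "v = y1 * e"
      have ex: "greenL u v \<and> (\<exists>n. cayley_path M u v n)"
        using d unfolding cayley_dist_def u_def v_def e_def by (auto split: if_splits)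
      define n where "n = (LEAST n. cayley_path M u v n)"
      have pn: "cayley_path M u v n" using ex n_def by (metis LeastI_ex)
      have "ereal (real n) \<le> ereal R" using d ex unfolding cayley_dist_def u_def v_def e_def n_def by auto
      hence "real n \<le> R" by simp
      hence nN: "n \<le> N" unfolding N_def by (simp add: le_nat_iff ceiling_le_iff le_ceiling_iff)
      obtain p where p: "p 0 = u" "p n = v" "\<forall>i\<le>n. greenL u (p i)"
          "\<forall>i<n. cayley_edge M (p i) (p (Suc i))"
        using pn unfolding cayley_path_def by blast
      define q where "q i = p (n - i)" for i
      have q0: "q 0 = v" "q n = u" using p by (auto simp: q_def)
      have qG: "\<forall>i\<le>n. greenL (q 0) (q i)"
        using p(3) ex q0 unfolding q_def greenL_def by (metis diff_le_self)
      have qE: "\<forall>i<n. cayley_edge M (q i) (q (Suc i))"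
      proof (intro allI impI)
        fix i assume "i < n"
        then have "n - Suc i < n" "Suc (n - Suc i) = n - i" by auto
        then have "cayley_edge M (p (n - Suc i)) (p (n - i))" using p(4) by metis
        then show "cayley_edge M (q i) (q (Suc i))" unfolding q_def cayley_edge_def by blast
      qed
      obtain w where w: "w \<in> wordsM M n" "q n = w * q 0"
        using path_words[OF IM MM qG qE, of n] by auto
      have "s = minv y1 * y1 * s" using a by simp
      also have "... = minv y1 * w * y1 * e" using w q0 by (simp add: u_def v_def mult.assoc)
      finally have "s = (minv y1 * w * y1) * e" .
      moreover have "minv y1 * w * y1 \<in> C" unfolding C_def using w nN by blast
      moreover have "e \<in> idems"
      proof -
        have "e*e = (minv s * s * minv s) * s" by (simp add: e_def mult.assoc)
        then show ?thesis unfolding idems_def using minv_prop[OF IM, of s] e_def by simp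
      qed
      ultimately show "s \<in> {c * e |c e. c \<in> C \<and> e \<in> idems}" by blast
    qed
    then show "\<exists>C. finite C \<and> {s. cayley_dist M (y1 * s) (y1 * (minv s * s)) \<le> ereal R} \<subseteq> {c * e |c e. c \<in> C \<and> e \<in> idems}"
      using fC by blast
  qed
qed

end
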